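(* Let $(X,d)$ be a tree space, let $x,y,z\in X$ be distinct, let $r\in X$ be the Steiner point of $x,y,z$, and let $V\subseteq X\setminus\{x,y,z\}$ be a finite set of points. Then: (1) If $w\in \mathrm{Zone}_1(x)$, then for every $\hat w\in V\setminus \mathrm{Zone}_1(x)$ we have $x\in g(w,\hat w)$. (2) If $w\in \mathrm{Zone}_2(x)$, then for every $\hat w\in V\setminus\big(\mathrm{Zone}_1(x)\cup\mathrm{Zone}_2(x)\big)$ we have $r\in g(w,\hat w)$.
   Context: A tree space ($\mathbb{R}$-tree) is a metric space in which any two points $a,b$ are joined by a unique geodesic segment $g(a,b)$, and the union of two geodesic segments $g(a,b),g(b,c)$ meeting only at $b$ is $g(a,c)$. For distinct $x,y,z$ in a tree space, the geodesics $g(x,y),g(y,z),g(x,z)$ meet in a unique point $r$, the Steiner point (it is the center of the universal tree on $x,y,z$, with $d(x,r)=(y,z)_x$ etc.). The Gromov product is $(a,b)_c=\tfrac12\big(d(c,a)+d(c,b)-d(a,b)\big)$. For $w\in V$ and a permutation $\pi$ of $\{x,y,z\}$ define the zones: $w\in\mathrm{Zone}_1(r)$ if $(x,y)_w=(x,z)_w=(y,z)_w>0$; $w\in\mathrm{Zone}_1(\pi x)$ if $(\pi x,\pi y)_w=(\pi x,\pi z)_w<(\pi y,\pi z)_w$ and $d(\pi x,w)=(\pi x,\pi y)_w$; $w\in\mathrm{Zone}_2(\pi x)$ if $(\pi x,\pi y)_w=(\pi x,\pi z)_w<(\pi y,\pi z)_w$ and $d(\pi x,w)>(\pi x,\pi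 y)_w$. (In particular $\mathrm{Zone}_1(x),\mathrm{Zone}_2(x)$ are these with $\pi$ the identity.) *)

theory Defs
  imports "HOL-Analysis.Analysis"
begin

definition geodesic_segment :: "'a::metric_space set \<Rightarrow> 'a \<Rightarrow> 'a \<Rightarrow> 'a set \<Rightarrow> bool" where
  "geodesic_segment X a b S \<longleftrightarrow>
     (\<exists>\<gamma>::real \<Rightarrow> 'a. \<gamma> ` {0..dist a b} = S \<and> S \<subseteq> X \<and>
        \<gamma> 0 = a \<and> \<gamma> (dist a b) = b \<and>
        (\<forall>s\<in>{0..dist a b}. \<forall>t\<in>{0..dist a b}. dist (\<gamma> s) (\<gamma> t) = \<bar>s - t\<bar>))"

definition geod :: "'a::metric_space set \<Rightarrow> 'a \<Rightarrow> 'a \<Rightarrow> 'a set" where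
  "geod X a b = (THE S. geodesic_segment X a b S)"

definition tree_space :: "'a::metric_space set \<Rightarrow> bool" where
  "tree_space X \<longleftrightarrow>
     (\<forall>a\<in>X. \<forall>b\<in>X. \<exists>!S. geodesic_segment X a b S) \<and>
     (\<forall>a\<in>X. \<forall>b\<in>X. \<forall>c\<in>X. geod X a b \<inter> geod X b c = {b} \<longrightarrow>
        geod X a b \<union> geod X b c = geod X a c)"

definition gromov :: "'a::metric_space \<Rightarrow> 'a \<Rightarrow> 'a \<Rightarrow> real" where
  "gromov a b c = (dist c a + dist c b - dist a b) / 2"

text \<open>Zones w.r.t. the ordered triple (x,y,z) (permutation = identity).\<close>
definition zone1 :: "'a::metric_space \<Rightarrow> 'a \<Rightarrow> 'a \<Rightarrow> 'a \<Rightarrow> bool" where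
  "zone1 x y z w \<longleftrightarrow> gromov x y w = gromov x z w \<and> gromov x z w < gromov y z w
     \<and> dist x w = gromov x y w"

definition zone2 :: "'a::metric_space \<Rightarrow> 'a \<Rightarrow> 'a \<Rightarrow> 'a \<Rightarrow> bool" where
  "zone2 x y z w \<longleftrightarrow> gromov x y w = gromov x z w \<and> gromov x z w < gromov y z w
     \<and> dist x w > gromov x y w"

end

theory Submission
  imports Defs
begin

definition btw :: "'a::metric_space \<Rightarrow> 'a \<Rightarrow> 'a \<Rightarrow> bool" where
  "btw a c b \<longleftrightarrow> dist a c + dist c b = dist a b"

lemma btw_sym: "btw a c b = btw b c a"
  unfolding btw_def by (simp add: dist_commute add.commute)

lemma geod_seg:
  assumes T: "tree_space X" and "a \<in> X" "b \<in> X"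
  shows "geodesic_segment X a b (geod X a b)"
proof -
  have "\<forall>a\<in>X. \<forall>b\<in>X. \<exists>!S. geodesic_segment X a b S" using T unfolding tree_space_def by (rule conjunct1)
  then have "\<exists>!S. geodesic_segment X a b S" using assms(2,3) by blast
  then show ?thesis unfolding geod_def by (rule theI')
qed

lemma geod_unique:
  assumes T: "tree_space X" and "a \<in> X" "b \<in> X" "geodesic_segment X a b S"
  shows "geod X a b = S"
proof -
  have "\<forall>a\<in>X. \<forall>b\<in>X. \<exists>!S. geodesic_segment X a b S" using T unfolding tree_space_def by (rule conjunct1)
  then have "\<exists>!S. geodesic_segment X a b S" using assms(2,3) by blast
  then show ?thesis using geod_seg[OF assms(1-3)] assms(4) by blast
qed

lemma isoD:
  assumes "\<forall>s\<in>{0..D}. \<forall>t\<in>{0..D}. dist (g s) (g t) = \<bar>s - t\<bar>"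
    "0 \<le> s" "s \<le> D" "0 \<le> t" "t \<le> D"
  shows "dist (g s) (g t) = \<bar>s - t\<bar>"
proof -
  have "s \<in> {0..D}" "t \<in> {0..D}" using assms(2-5) by simp_all
  then show ?thesis using assms(1) by blast
qed

lemma seg_param:
  assumes "g 0 = a" "\<forall>s\<in>{0..D}. \<forall>t\<in>{0..D}. dist (g s) (g t) = \<bar>s - t\<bar>" "s \<in> {0..D}"
  shows "dist a (g s) = s"
proof -
  have s: "0 \<le> s" "s \<le> D" using assms(3) by simp_all
  have "dist (g 0) (g s) = \<bar>0 - s\<bar>" using isoD[OF assms(2), of 0 s] s by simp
  then show ?thesis using assms(1) s by simp
qed

lemma in_geod_btw:
  assumes T: "tree_space X" and "a \<in> X" "b \<in> X" "c \<in> geod X a b"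
  shows "c \<in> X \<and> btw a c b"
proof -
  obtain g where g: "g ` {0..dist a b} = geod X a b" "geod X a b \<subseteq> X" "g 0 = a"
    "g (dist a b) = b" "\<forall>s\<in>{0..dist a b}. \<forall>t\<in>{0..dist a b}. dist (g s) (g t) = \<bar>s - t\<bar>"
    using geod_seg[OF T assms(2,3)] unfolding geodesic_segment_def by blast
  obtain s where s: "s \<in> {0..dist a b}" "c = g s" using g(1) assms(4) by blast
  have s': "0 \<le> s" "s \<le> dist a b" using s(1) by simp_all
  have 1: "dist a c = s" using seg_param[OF g(3) g(5) s(1)] s(2) by simp
  have "dist (g s) (g (dist a b)) = \<bar>s - dist a b\<bar>" using isoD[OF g(5), of s "dist a b"] s' by simp
  then have 2: "dist c b = dist a b - s" using s(2) g(4) s' by simp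
  have 3: "c \<in> X" using g(2) assms(4) by blast
  show ?thesis using 1 2 3 unfolding btw_def by simp
qed

lemma concat_iso:
  assumes g1: "g1 0 = a" "g1 L = c" "\<forall>s\<in>{0..L}. \<forall>t\<in>{0..L}. dist (g1 s) (g1 t) = \<bar>s - t\<bar>"
    and g2: "g2 0 = c" "g2 M = b" "\<forall>s\<in>{0..M}. \<forall>t\<in>{0..M}. dist (g2 s) (g2 t) = \<bar>s - t\<bar>"
    and h: "L + M = dist a b" "L \<ge> 0" "M \<ge> 0"
    and st: "0 \<le> s" "s \<le> L" "L < t" "t \<le> L + M"
  shows "dist (g1 s) (g2 (t - L)) = t - s"
proof -
  have "dist (g1 s) (g1 L) = \<bar>s - L\<bar>" using isoD[OF g1(3), of s L] st h by simp
  then have a1: "dist (g1 s) c = L - s" using g1(2) st by simp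
  have "dist (g2 0) (g2 (t - L)) = \<bar>0 - (t - L)\<bar>" using isoD[OF g2(3), of 0 "t - L"] st h by simp
  then have a2: "dist c (g2 (t - L)) = t - L" using g2(1) st by simp
  have "dist (g1 0) (g1 s) = \<bar>0 - s\<bar>" using isoD[OF g1(3), of 0 s] st h by simp
  then have a3: "dist a (g1 s) = s" using g1(1) st by simp
  have "dist (g2 (t - L)) (g2 M) = \<bar>(t - L) - M\<bar>" using isoD[OF g2(3), of "t - L" M] st h by simp
  then have a4: "dist (g2 (t - L)) b = M - (t - L)" using g2(2) st by simp
  have t1: "dist (g1 s) (g2 (t - L)) \<le> dist (g1 s) c + dist c (g2 (t - L))" by (rule dist_triangle)
  have t2: "dist a b \<le> dist a (g1 s) + dist (g1 s) b" by (rule dist_triangle)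
  have t3: "dist (g1 s) b \<le> dist (g1 s) (g2 (t - L)) + dist (g2 (t - L)) b" by (rule dist_triangle)
  show ?thesis using a1 a2 a3 a4 h t1 t2 t3 by linarith
qed

lemma btw_in_geod:
  assumes T: "tree_space X" and aX: "a \<in> X" and bX: "b \<in> X" and cX: "c \<in> X" and h: "btw a c b"
  shows "c \<in> geod X a b"
proof -
  obtain g1 where g1: "g1 ` {0..dist a c} = geod X a c" "geod X a c \<subseteq> X" "g1 0 = a"
    "g1 (dist a c) = c" "\<forall>s\<in>{0..dist a c}. \<forall>t\<in>{0..dist a c}. dist (g1 s) (g1 t) = \<bar>s - t\<bar>"
    using geod_seg[OF T aX cX] unfolding geodesic_segment_def by blast
  obtain g2 where g2: "g2 ` {0..dist c b} = geod X c b" "geod X c b \<subseteq> X" "g2 0 = c"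
    "g2 (dist c b) = b" "\<forall>s\<in>{0..dist c b}. \<forall>t\<in>{0..dist c b}. dist (g2 s) (g2 t) = \<bar>s - t\<bar>"
    using geod_seg[OF T cX bX] unfolding geodesic_segment_def by blast
  define L where "L = dist a c"
  define M where "M = dist c b"
  have hLM: "L + M = dist a b" "L \<ge> 0" "M \<ge> 0" using h unfolding btw_def L_def M_def by auto
  define g where "g = (\<lambda>t. if t \<le> L then g1 t else g2 (t - L))"
  have mix: "dist (g s) (g t) = \<bar>s - t\<bar>" if "0 \<le> s" "s \<le> L" "L < t" "t \<le> L + M" for s t
  proof -
    have "dist (g1 s) (g2 (t - L)) = t - s"
      using concat_iso[OF g1(3) g1(4)[folded L_def] g1(5)[folded L_def] g2(3) g2(4)[folded M_def]
          g2(5)[folded M_def] hLM that] .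
    then show ?thesis using that unfolding g_def by auto
  qed
  have iso: "\<forall>s\<in>{0..dist a b}. \<forall>t\<in>{0..dist a b}. dist (g s) (g t) = \<bar>s - t\<bar>"
  proof (intro ballI)
    fix s t assume s: "s \<in> {0..dist a b}" and t: "t \<in> {0..dist a b}"
    show "dist (g s) (g t) = \<bar>s - t\<bar>"
    proof (cases "s \<le> L")
      case True
      show ?thesis
      proof (cases "t \<le> L")
        case True
        then show ?thesis using \<open>s \<le> L\<close> s t g1(5) unfolding g_def L_def by auto
      next
        case False
        then show ?thesis using mix[of s t] \<open>s \<le> L\<close> s t hLM by auto
      qed
    next
      case False
      show ?thesis
      proof (cases "t \<le> L")
        case True
        then show ?thesis using mix[of t s] False s t hLM by (auto simp: dist_commute abs_minus_commute)
      next
        case False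
        have "dist (g2 (s - L)) (g2 (t - L)) = \<bar>(s - L) - (t - L)\<bar>"
          using g2(5) False \<open>\<not> s \<le> L\<close> s t hLM unfolding M_def by auto
        then show ?thesis using False \<open>\<not> s \<le> L\<close> unfolding g_def by auto
      qed
    qed
  qed
  have sub: "g ` {0..dist a b} \<subseteq> X"
  proof
    fix p assume "p \<in> g ` {0..dist a b}"
    then obtain t where t: "t \<in> {0..dist a b}" "p = g t" by blast
    show "p \<in> X"
    proof (cases "t \<le> L")
      case True
      then have "p \<in> geod X a c" using t g1(1) unfolding g_def L_def by auto
      then show ?thesis using g1(2) by auto
    next
      case False
      then have "p \<in> geod X c b" using t g2(1) hLM unfolding g_def M_def by auto
      then show ?thesis using g2(2) by auto
    qed
  qed
  have g0: "g 0 = a" using g1(3) hLM unfolding g_def by auto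
  have gD: "g (dist a b) = b"
  proof (cases "dist a b \<le> L")
    case True
    then have "M = 0" "dist a b = L" using hLM by auto
    then show ?thesis using g1(4) g2(3) g2(4) True unfolding g_def L_def M_def by auto
  next
    case False
    have e: "dist a b - L = M" using hLM by simp
    have "g (dist a b) = g2 (dist a b - L)" using False unfolding g_def by simp
    also have "\<dots> = b" unfolding e M_def by (rule g2(4))
    finally show ?thesis .
  qed
  have "geodesic_segment X a b (g ` {0..dist a b})"
    unfolding geodesic_segment_def using iso sub g0 gD by blast
  then have e: "geod X a b = g ` {0..dist a b}" using geod_unique[OF T aX bX] by blast
  have "g L = c" using g1(4) unfolding g_def L_def by auto
  moreover have "L \<in> {0..dist a b}" using hLM by auto
  ultimately show ?thesis using e by blast
qed


lemma median:
  assumes T: "tree_space X" and aX: "a \<in> X" and bX: "b \<in> X" and cX: "c \<in> X"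
  shows "\<exists>m\<in>X. btw a m b \<and> btw a m c \<and> btw b m c"
proof -
  obtain g1 where g1: "g1 ` {0..dist a b} = geod X a b" "geod X a b \<subseteq> X" "g1 0 = a"
    "g1 (dist a b) = b" "\<forall>s\<in>{0..dist a b}. \<forall>t\<in>{0..dist a b}. dist (g1 s) (g1 t) = \<bar>s - t\<bar>"
    using geod_seg[OF T aX bX] unfolding geodesic_segment_def by blast
  obtain g2 where g2: "g2 ` {0..dist a c} = geod X a c" "geod X a c \<subseteq> X" "g2 0 = a"
    "g2 (dist a c) = c" "\<forall>s\<in>{0..dist a c}. \<forall>t\<in>{0..dist a c}. dist (g2 s) (g2 t) = \<bar>s - t\<bar>"
    using geod_seg[OF T aX cX] unfolding geodesic_segment_def by blast
  define M where "M = min (dist a b) (dist a c)"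
  define S where "S = {t. 0 \<le> t \<and> t \<le> M \<and> g1 t = g2 t}"
  have S0: "0 \<in> S" unfolding S_def M_def using g1(3) g2(3) by auto
  have Sne: "S \<noteq> {}" using S0 by blast
  have Sbdd: "bdd_above S" unfolding S_def by (rule bdd_aboveI[of _ M]) auto
  define T0 where "T0 = Sup S"
  have T0ge: "0 \<le> T0" unfolding T0_def using cSup_upper[OF S0 Sbdd] .
  have T0le: "T0 \<le> M" unfolding T0_def by (rule cSup_least[OF Sne]) (auto simp: S_def)
  have T1: "T0 \<in> {0..dist a b}" "T0 \<in> {0..dist a c}" using T0ge T0le unfolding M_def by auto
  have eq: "g1 T0 = g2 T0"
  proof (rule ccontr)
    assume ne: "g1 T0 \<noteq> g2 T0"
    define e where "e = dist (g1 T0) (g2 T0)"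
    have epos: "e > 0" using ne unfolding e_def by simp
    have "T0 - e/4 < Sup S" using epos unfolding T0_def by simp
    then obtain t where t: "t \<in> S" "T0 - e/4 < t" using less_cSupD[OF Sne] by blast
    have tle: "t \<le> T0" unfolding T0_def using cSup_upper[OF t(1) Sbdd] .
    have tS: "0 \<le> t" "t \<le> M" "g1 t = g2 t" using t(1) unfolding S_def by auto
    have tt: "t \<in> {0..dist a b}" "t \<in> {0..dist a c}" using tS unfolding M_def by auto
    have d1: "dist (g1 T0) (g1 t) = T0 - t" using isoD[OF g1(5), of T0 t] T1 tt tle by simp
    have d2: "dist (g2 t) (g2 T0) = T0 - t" using isoD[OF g2(5), of t T0] T1 tt tle by simp
    have "e \<le> dist (g1 T0) (g1 t) + dist (g1 t) (g2 T0)" unfolding e_def by (rule dist_triangle)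
    also have "dist (g1 t) (g2 T0) = dist (g2 t) (g2 T0)" using tS by simp
    finally show False using d1 d2 t(2) epos by linarith
  qed
  define m where "m = g1 T0"
  have mX: "m \<in> X" using g1(1,2) T1 unfolding m_def by blast
  have dam: "dist a m = T0" using seg_param[OF g1(3) g1(5) T1(1)] unfolding m_def .
  have Db: "dist a b \<in> {0..dist a b}" by simp
  have Dc: "dist a c \<in> {0..dist a c}" by simp
  have "dist (g1 T0) (g1 (dist a b)) = \<bar>T0 - dist a b\<bar>" using isoD[OF g1(5), of T0 "dist a b"] T1(1) by simp
  then have dmb: "dist m b = dist a b - T0" using g1(4) T1 unfolding m_def by simp
  have "dist (g2 T0) (g2 (dist a c)) = \<bar>T0 - dist a c\<bar>" using isoD[OF g2(5), of T0 "dist a c"] T1(2) by simp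
  then have dmc: "dist m c = dist a c - T0" using g2(4) T1 eq unfolding m_def by simp
  have b1: "btw a m b" unfolding btw_def using dam dmb by simp
  have b2: "btw a m c" unfolding btw_def using dam dmc by simp
  have inter: "geod X b m \<inter> geod X m c = {m}"
  proof
    show "{m} \<subseteq> geod X b m \<inter> geod X m c"
      using btw_in_geod[OF T bX mX mX] btw_in_geod[OF T mX cX mX] unfolding btw_def by simp
  next
    show "geod X b m \<inter> geod X m c \<subseteq> {m}"
    proof
      fix p assume p: "p \<in> geod X b m \<inter> geod X m c"
      have pX: "p \<in> X" and p1: "btw b p m" using in_geod_btw[OF T bX mX] p by auto
      have p2: "btw m p c" using in_geod_btw[OF T mX cX] p by auto
      have tri: "dist a p \<le> dist a m + dist m p" "dist a b \<le> dist a p + dist p b"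
        "dist a c \<le> dist a p + dist p c" "dist a m \<le> dist a p + dist p m"
        by (rule dist_triangle)+
      have dpm: "dist p m = dist m p" by (simp add: dist_commute)
      have dbp: "dist b p = dist p b" by (simp add: dist_commute)
      have dbm: "dist b m = dist m b" by (simp add: dist_commute)
      have p1': "dist b p + dist p m = dist b m" using p1 unfolding btw_def .
      have p2': "dist m p + dist p c = dist m c" using p2 unfolding btw_def .
      have b1': "dist a m + dist m b = dist a b" using b1 unfolding btw_def .
      have b2': "dist a m + dist m c = dist a c" using b2 unfolding btw_def .
      have q0: "dist a p = dist a m + dist m p"
        using p1' b1' tri(1) tri(2) dpm dbp dbm by linarith
      then have q1: "dist a p = T0 + dist m p" using dam by simp
      have "dist a p + dist p b = dist a b" using q0 p1' b1' dpm dbp dbm by linarith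
      then have q2: "btw a p b" unfolding btw_def .
      have "dist a p + dist p c = dist a c" using q0 p2' b2' by linarith
      then have q3: "btw a p c" unfolding btw_def .
      have pab: "p \<in> geod X a b" using btw_in_geod[OF T aX bX pX q2] .
      have pac: "p \<in> geod X a c" using btw_in_geod[OF T aX cX pX q3] .
      obtain s1 where s1: "s1 \<in> {0..dist a b}" "p = g1 s1" using pab g1(1) by blast
      obtain s2 where s2: "s2 \<in> {0..dist a c}" "p = g2 s2" using pac g2(1) by blast
      have e1: "s1 = dist a p" using seg_param[OF g1(3) g1(5) s1(1)] s1(2) by simp
      have e2: "s2 = dist a p" using seg_param[OF g2(3) g2(5) s2(1)] s2(2) by simp
      have f1: "g1 (dist a p) = p" using s1(2) e1 by simp
      have f2: "g2 (dist a p) = p" using s2(2) e2 by simp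
      have f3: "0 \<le> dist a p" "dist a p \<le> dist a b" "dist a p \<le> dist a c"
        using s1(1) s2(1) e1 e2 by simp_all
      have "dist a p \<in> S" unfolding S_def M_def using f1 f2 f3 by simp
      then have "dist a p \<le> T0" unfolding T0_def using cSup_upper[OF _ Sbdd] by blast
      then have "dist m p = 0" using q1 by simp
      then show "p \<in> {m}" by simp
    qed
  qed
  have glue: "\<forall>a\<in>X. \<forall>b\<in>X. \<forall>c\<in>X. geod X a b \<inter> geod X b c = {b} \<longrightarrow>
        geod X a b \<union> geod X b c = geod X a c" using T unfolding tree_space_def by (rule conjunct2)
  have "geod X b m \<union> geod X m c = geod X b c"
    using glue[rule_format, OF bX mX cX inter] .
  moreover have "m \<in> geod X m c" using btw_in_geod[OF T mX cX mX] unfolding btw_def by simp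
  ultimately have "m \<in> geod X b c" by blast
  then have b3: "btw b m c" using in_geod_btw[OF T bX cX] by blast
  show ?thesis using mX b1 b2 b3 by blast
qed

lemma lin:
  assumes T: "tree_space X" and X: "q \<in> X" "m \<in> X" "n \<in> X" "u \<in> X"
    and h: "btw q m u" "btw q n u" "dist q n \<le> dist q m"
  shows "btw q n m"
proof -
  obtain g where g: "g ` {0..dist q u} = geod X q u" "g 0 = q"
    "\<forall>s\<in>{0..dist q u}. \<forall>t\<in>{0..dist q u}. dist (g s) (g t) = \<bar>s - t\<bar>"
    using geod_seg[OF T X(1) X(4)] unfolding geodesic_segment_def by blast
  obtain s where s: "s \<in> {0..dist q u}" "m = g s" using btw_in_geod[OF T X(1) X(4) X(2) h(1)] g(1) by blast
  obtain t where t: "t \<in> {0..dist q u}" "n = g t" using btw_in_geod[OF T X(1) X(4) X(3) h(2)] g(1) by blast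
  have e1: "dist q m = s" using seg_param[OF g(2) g(3) s(1)] s(2) by simp
  have e2: "dist q n = t" using seg_param[OF g(2) g(3) t(1)] t(2) by simp
  have "dist n m = \<bar>t - s\<bar>" using isoD[OF g(3), of t s] s t by simp
  then show ?thesis unfolding btw_def using e1 e2 h(3) by simp
qed


lemma btw_trans1:
  assumes "btw a m x" "btw a x y" shows "btw m x y"
proof -
  have "dist m y \<le> dist m x + dist x y" "dist a y \<le> dist a m + dist m y"
    by (rule dist_triangle)+
  then show ?thesis using assms unfolding btw_def by linarith
qed

lemma btw_trans2:
  assumes "btw q m n" "btw q n b" shows "btw q m b"
proof -
  have "dist m b \<le> dist m n + dist n b" "dist q b \<le> dist q m + dist m b"
    by (rule dist_triangle)+
  then show ?thesis using assms unfolding btw_def by linarith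
qed

lemma btw_contra:
  assumes "btw q m a" "btw q m b" "btw a q b" shows "m = q"
proof -
  have "dist a b \<le> dist a m + dist m b" by (rule dist_triangle)
  moreover have "dist a m = dist m a" "dist a q = dist q a" by (simp_all add: dist_commute)
  moreover have "dist q m \<ge> 0" by simp
  ultimately have "dist q m = 0" using assms unfolding btw_def by linarith
  then show ?thesis by simp
qed

lemma btw_left: "btw a a b" unfolding btw_def by simp
lemma btw_right: "btw a b b" unfolding btw_def by simp

lemma lemC:
  assumes T: "tree_space X" and X: "q \<in> X" "m \<in> X" "n \<in> X" "u \<in> X"
    and h: "btw q m u" "btw q n u" "m \<noteq> q" "n \<noteq> q" "btw q m a" "btw q n b"
  shows "\<not> btw a q b"
proof
  assume ab: "btw a q b"
  show False
  proof (cases "dist q m \<le> dist q n")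
    case True
    have "btw q m n" using lin[OF T X(1) X(3) X(2) X(4) h(2) h(1) True] .
    then have "btw q m b" using btw_trans2 h(6) by blast
    then show False using btw_contra[OF h(5) _ ab] h(3) by blast
  next
    case False
    have "btw q n m" using lin[OF T X(1) X(2) X(3) X(4) h(1) h(2)] False by simp
    then have "btw q n a" using btw_trans2 h(5) by blast
    moreover have "btw b q a" using ab btw_sym by blast
    ultimately show False using btw_contra[OF h(6)] h(4) by blast
  qed
qed

lemma lemT:
  assumes T: "tree_space X" and X: "q \<in> X" "m \<in> X" "a \<in> X" "u \<in> X"
    and h: "btw m q a" "btw q m u" "m \<noteq> q"
  shows "btw u q a"
proof -
  obtain n where n: "n \<in> X" "btw q n a" "btw q n u" "btw a n u"
    using median[OF T X(1) X(3) X(4)] by blast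
  show ?thesis
  proof (cases "n = q")
    case True
    then show ?thesis using n(4) btw_sym by blast
  next
    case False
    have "\<not> btw m q a" using lemC[OF T X(1) X(2) n(1) X(4) h(2) n(3) h(3) False btw_right n(2)] .
    then show ?thesis using h(1) by blast
  qed
qed

lemma lemF:
  assumes T: "tree_space X" and X: "q \<in> X" "x \<in> X" "y \<in> X" "u \<in> X"
    and h: "btw x q y"
  shows "btw u q x \<or> btw u q y"
proof (rule ccontr)
  assume nn: "\<not> (btw u q x \<or> btw u q y)"
  obtain n1 where n1: "n1 \<in> X" "btw q n1 x" "btw q n1 u" "btw x n1 u"
    using median[OF T X(1) X(2) X(4)] by blast
  obtain n2 where n2: "n2 \<in> X" "btw q n2 y" "btw q n2 u" "btw y n2 u"
    using median[OF T X(1) X(3) X(4)] by blast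
  have "n1 \<noteq> q" using n1(4) nn btw_sym by blast
  moreover have "n2 \<noteq> q" using n2(4) nn btw_sym by blast
  ultimately have "\<not> btw x q y" using lemC[OF T X(1) n1(1) n2(1) X(4) n1(3) n2(3) _ _ n1(2) n2(2)] by blast
  then show False using h by blast
qed


theorem lemma3:
  fixes X V :: "'a::metric_space set" and x y z r :: 'a
  assumes "tree_space X"
    and "x \<in> X" "y \<in> X" "z \<in> X"
    and "x \<noteq> y" "y \<noteq> z" "x \<noteq> z"
    and "r \<in> X" "r \<in> geod X x y" "r \<in> geod X y z" "r \<in> geod X x z"
    and "finite V" "V \<subseteq> X - {x, y, z}"
  shows "(\<forall>w\<in>V. zone1 x y z w \<longrightarrow>
            (\<forall>w'\<in>V. \<not> zone1 x y z w' \<longrightarrow> x \<in> geod X w w'))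
       \<and> (\<forall>w\<in>V. zone2 x y z w \<longrightarrow>
            (\<forall>w'\<in>V. \<not> zone1 x y z w' \<and> \<not> zone2 x y z w' \<longrightarrow> r \<in> geod X w w'))"
proof -
  note T = assms(1)
  note xX = assms(2) and yX = assms(3) and zX = assms(4) and rX = assms(8)
  have VX: "\<And>v. v \<in> V \<Longrightarrow> v \<in> X" using assms(13) by blast
  have rxy: "btw x r y" using in_geod_btw[OF T xX yX assms(9)] by blast
  have ryz: "btw y r z" using in_geod_btw[OF T yX zX assms(10)] by blast
  have rxz: "btw x r z" using in_geod_btw[OF T xX zX assms(11)] by blast
  have part1: "x \<in> geod X w w'"
    if w: "w \<in> X" and w': "w' \<in> X" and z1: "zone1 x y z w" and nz1: "\<not> zone1 x y z w'" for w w'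
  proof -
    have c1: "dist x w = dist w x" "dist x w' = dist w' x" by (simp_all add: dist_commute)
    have zz: "gromov x y w = gromov x z w" "gromov x z w < gromov y z w" "dist x w = gromov x y w"
      using z1 unfolding zone1_def by blast+
    have bwy1: "btw w x y" using zz c1 unfolding gromov_def btw_def by argo
    have bwy2: "btw w x z" using zz c1 unfolding gromov_def btw_def by argo
    note bwy = bwy1 bwy2
    have K: "dist x y + dist x z - dist y z > 0" using zz c1 bwy unfolding gromov_def btw_def by argo
    obtain m where m: "m \<in> X" "btw w m x" "btw w m w'" "btw x m w'"
      using median[OF T w xX w'] by blast
    show ?thesis
    proof (cases "m = x")
      case True
      then show ?thesis using btw_in_geod[OF T w w' xX] m(3) by simp
    next
      case False
      have "btw m x y" using btw_trans1[OF m(2) bwy(1)] .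
      then have by': "btw w' x y" using lemT[OF T xX m(1) yX w' _ m(4) False] by blast
      have "btw m x z" using btw_trans1[OF m(2) bwy(2)] .
      then have bz': "btw w' x z" using lemT[OF T xX m(1) zX w' _ m(4) False] by blast
      have "zone1 x y z w'" unfolding zone1_def gromov_def
        using by' bz' K c1 unfolding btw_def by argo
      then show ?thesis using nz1 by blast
    qed
  qed
  have cm: "dist r x = dist x r" "dist r y = dist y r" "dist r z = dist z r" "dist y x = dist x y"
    "dist z x = dist x z" "dist z y = dist y z" by (simp_all add: dist_commute)
  define P where "P u \<longleftrightarrow> gromov x y u = gromov x z u \<and> gromov x z u < gromov y z u" for u
  have NP1: "\<not> P u" if "btw u r x" "btw u r y" for u
    using that rxy rxz ryz cm unfolding P_def gromov_def btw_def
    by argo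
  have NP2: "\<not> P u" if "btw u r x" "btw u r z" for u
    using that rxy rxz ryz cm unfolding P_def gromov_def btw_def
    by argo
  have NP3: "btw u r x" if "btw u r y" "btw u r z" "\<not> P u" for u
  proof -
    have "dist u x \<le> dist u r + dist r x" by (rule dist_triangle)
    then show ?thesis using that rxy rxz ryz cm unfolding P_def gromov_def btw_def
      by argo
  qed
  have part2: "r \<in> geod X w w'"
    if w: "w \<in> X" and w': "w' \<in> X" and z2: "zone2 x y z w"
      and nz: "\<not> zone1 x y z w'" "\<not> zone2 x y z w'" for w w'
  proof -
    have Pw: "P w" using z2 unfolding zone2_def P_def by blast
    have nPw': "\<not> P w'"
    proof
      assume Pw': "P w'"
      have "dist w' y \<le> dist w' x + dist x y" by (rule dist_triangle)
      moreover have "dist x w' = dist w' x" by (simp add: dist_commute)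
      ultimately have "dist x w' \<ge> gromov x y w'" unfolding gromov_def by argo
      then show False using nz Pw' unfolding zone1_def zone2_def P_def by argo
    qed
    have F1: "btw w r x \<or> btw w r y" using lemF[OF T rX xX yX w rxy] .
    have F2: "btw w r x \<or> btw w r z" using lemF[OF T rX xX zX w rxz] .
    have F3: "btw w r y \<or> btw w r z" using lemF[OF T rX yX zX w ryz] .
    have nwx: "\<not> btw w r x" using F3 NP1 NP2 Pw by blast
    have wy: "btw w r y" and wz: "btw w r z" using F1 F2 nwx by blast+
    obtain m where m: "m \<in> X" "btw w m r" "btw w m w'" "btw r m w'"
      using median[OF T w rX w'] by blast
    show ?thesis
    proof (cases "m = r")
      case True
      then show ?thesis using btw_in_geod[OF T w w' rX] m(3) by simp
    next
      case False
      have rmw: "btw r m w" using m(2) btw_sym by blast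
      have nmx: "\<not> btw m r x" using lemT[OF T rX m(1) xX w _ rmw False] nwx by blast
      have my: "btw m r y" using lemF[OF T rX xX yX m(1) rxy] nmx by blast
      have mz: "btw m r z" using lemF[OF T rX xX zX m(1) rxz] nmx by blast
      have w'y: "btw w' r y" using lemT[OF T rX m(1) yX w' my m(4) False] .
      have w'z: "btw w' r z" using lemT[OF T rX m(1) zX w' mz m(4) False] .
      have w'x: "btw w' r x" using NP3[OF w'y w'z nPw'] .
      have "btw w' m r" using m(4) btw_sym by blast
      then have "btw m r x" using btw_trans1 w'x by blast
      then show ?thesis using nmx by blast
    qed
  qed
  show ?thesis using part1 part2 VX by blast
qed

end
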